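(* Assume the Standing Setting below. Then for every $n\in\mathbb Z$ there exists a finite frame $\zeta_{(n,1)},\dots,\zeta_{(n,m_n)}$ for $\mathcal A_n\subseteq A_n$ such that $\sum_{j=1}^{m_n}\phi(\zeta_{(n,j)})\,\delta(\zeta_{(n,j)}^* )=0$.
   Context: Standing Setting: $A$ is a unital $C^*$-algebra with a strongly continuous action $\sigma$ of $S^1$; $A_n:=\{a:\sigma_\lambda(a)=\lambda^na\ \forall\lambda\}$, $P_0(a):=\frac1{2\pi}\int_0^{2\pi}\sigma_{e^{it}}(a)dt$. $\mathcal A\subseteq A$ is a norm-dense unital $*$-subalgebra with $P_0(\mathcal A)\subseteq\mathcal A$, generated as a $*$-algebra by $\mathcal A\cap A_1$; $\mathcal A_n:=\mathcal A\cap A_n$. $H_0$ is a separable Hilbert space, $\rho:A_0\to\mathcal B(H_0)$ an injective unital $*$-homomorphism, $D_0$ a selfadjoint operator on $H_0$ such that for every $a\in\mathcal A_0$, $\rho(a)$ preserves $\operatorname{Dom}(D_0)$ and $[D_0,\rho(a)]$ extends to a bounded operator $\delta_0(a)$. Moreover $H\supseteq H_0$ is a separable Hilbert space containing $H_0$ as a closed subspace, $\phi:A\to\mathcal B(H)$ a unital $*$-homomorphism and $\delta:\mathcal A\to\mathcal B(H)$ a linear map such that (1) $\delta(a)\xi=\delta_0(a)\xi$ and $\phi(a)\xi=\rho(a)\xi$ for $a\in\mathcal A_0$, $\xi\in H_0$; (2) there is $\mu>0$ with $\delta(ab)=\delta(a)\phi(b)+\mu^n\phi(a)\delta(b)$ whenever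 $a\in\mathcal A_n$, $b\in\mathcal A$; (3) there exist $\zeta^R_1,\dots,\zeta^R_k,\zeta^L_1,\dots,\zeta^L_m\in\mathcal A_1$ with $\sum_j\zeta_j^R(\zeta_j^R)^*=1=\sum_j(\zeta_j^L)^*\zeta_j^L$ and $\sum_j\phi(\zeta^R_j)\delta((\zeta^R_j)^* )=0=\sum_j\phi(\zeta_j^L)^*\delta(\zeta_j^L)$. A finite frame for $\mathcal A_n$ is a finite family $\zeta_1,\dots,\zeta_p\in\mathcal A_n$ with $\sum_j\zeta_j\zeta_j^*x=x$ for all $x\in\mathcal A_n$. *)

theory Defs
  imports "HOL-Analysis.Analysis"
begin

class complex_normed_vector = real_normed_vector +
  fixes cscale :: "complex \<Rightarrow> 'a \<Rightarrow> 'a"  (infixr \<open>*\<^sub>C\<close> 75)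
  assumes cscale_add_right: "c *\<^sub>C (x + y) = c *\<^sub>C x + c *\<^sub>C y"
    and cscale_add_left: "(c + d) *\<^sub>C x = c *\<^sub>C x + d *\<^sub>C x"
    and cscale_cscale: "c *\<^sub>C (d *\<^sub>C x) = (c * d) *\<^sub>C x"
    and cscale_one: "1 *\<^sub>C x = x"
    and scaleR_cscale: "r *\<^sub>R x = complex_of_real r *\<^sub>C x"
    and norm_cscale: "norm (c *\<^sub>C x) = cmod c * norm x"

text \<open>Unital C*-algebra (the zero algebra is allowed).\<close>
class cstar_algebra = complex_normed_vector + real_normed_algebra + ring_1 + banach +
  fixes cstar :: "'a \<Rightarrow> 'a"
  assumes cstar_cstar: "cstar (cstar x) = x"
    and cstar_add: "cstar (x + y) = cstar x + cstar y"
    and cstar_cscale: "cstar (c *\<^sub>C x) = cnj c *\<^sub>C cstar x"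
    and cstar_mult: "cstar (x * y) = cstar y * cstar x"
    and cscale_mult_left: "(c *\<^sub>C x) * y = c *\<^sub>C (x * y)"
    and cscale_mult_right: "x * (c *\<^sub>C y) = c *\<^sub>C (x * y)"
    and cstar_identity: "norm (cstar x * x) = (norm x)\<^sup>2"

text \<open>Complex inner product spaces (inner product conjugate-linear in the first argument).\<close>
class complex_inner = complex_normed_vector +
  fixes cinner :: "'a \<Rightarrow> 'a \<Rightarrow> complex"
  assumes cinner_add_right: "cinner x (y + z) = cinner x y + cinner x z"
    and cinner_cscale_right: "cinner x (c *\<^sub>C y) = c * cinner x y"
    and cinner_commute: "cinner y x = cnj (cinner x y)"
    and cinner_self: "cinner x x = complex_of_real ((norm x)\<^sup>2)"

class chilbert_space = complex_inner + banach

definition csubspace :: "'h::complex_normed_vector set \<Rightarrow> bool" where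
  "csubspace S \<longleftrightarrow> 0 \<in> S \<and> (\<forall>x\<in>S. \<forall>y\<in>S. x + y \<in> S) \<and> (\<forall>c. \<forall>x\<in>S. c *\<^sub>C x \<in> S)"

text \<open>A bounded (complex-)linear operator on the closed subspace S (represented by its values on S).\<close>
definition bounded_op_on :: "'h::complex_normed_vector set \<Rightarrow> ('h \<Rightarrow> 'h) \<Rightarrow> bool" where
  "bounded_op_on S T \<longleftrightarrow> T ` S \<subseteq> S
     \<and> (\<forall>x\<in>S. \<forall>y\<in>S. T (x + y) = T x + T y)
     \<and> (\<forall>c. \<forall>x\<in>S. T (c *\<^sub>C x) = c *\<^sub>C T x)
     \<and> (\<exists>K. \<forall>x\<in>S. norm (T x) \<le> K * norm x)"

text \<open>Selfadjoint (possibly unbounded) operator D with domain Dom on the Hilbert space H0: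
  densely defined, linear, and equal to its adjoint.\<close>
definition selfadjoint_on :: "'h::complex_inner set \<Rightarrow> 'h set \<Rightarrow> ('h \<Rightarrow> 'h) \<Rightarrow> bool" where
  "selfadjoint_on H0 Dom D \<longleftrightarrow> Dom \<subseteq> H0 \<and> csubspace Dom \<and> H0 \<subseteq> closure Dom
     \<and> D ` Dom \<subseteq> H0
     \<and> (\<forall>x\<in>Dom. \<forall>y\<in>Dom. D (x + y) = D x + D y)
     \<and> (\<forall>c. \<forall>x\<in>Dom. D (c *\<^sub>C x) = c *\<^sub>C D x)
     \<and> (\<forall>y\<in>H0. \<forall>z\<in>H0. (\<forall>x\<in>Dom. cinner (D x) y = cinner x z) \<longleftrightarrow> (y \<in> Dom \<and> z = D y))"

definition star_rep_on :: "'a::cstar_algebra set \<Rightarrow> 'h::complex_inner set \<Rightarrow> ('a \<Rightarrow> 'h \<Rightarrow> 'h) \<Rightarrow> bool" where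
  "star_rep_on B S \<pi> \<longleftrightarrow> (\<forall>a\<in>B. bounded_op_on S (\<pi> a))
     \<and> (\<forall>a\<in>B. \<forall>b\<in>B. \<forall>x\<in>S. \<pi> (a + b) x = \<pi> a x + \<pi> b x)
     \<and> (\<forall>c. \<forall>a\<in>B. \<forall>x\<in>S. \<pi> (c *\<^sub>C a) x = c *\<^sub>C \<pi> a x)
     \<and> (\<forall>a\<in>B. \<forall>b\<in>B. \<forall>x\<in>S. \<pi> (a * b) x = \<pi> a (\<pi> b x))
     \<and> (\<forall>x\<in>S. \<pi> 1 x = x)
     \<and> (\<forall>a\<in>B. \<forall>x\<in>S. \<forall>y\<in>S. cinner (\<pi> a x) y = cinner x (\<pi> (cstar a) y))"

definition circle_action :: "(complex \<Rightarrow> 'a::cstar_algebra \<Rightarrow> 'a) \<Rightarrow> bool" where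
  "circle_action \<sigma> \<longleftrightarrow>
     (\<forall>l\<in>sphere 0 1. (\<forall>a b. \<sigma> l (a + b) = \<sigma> l a + \<sigma> l b)
        \<and> (\<forall>c a. \<sigma> l (c *\<^sub>C a) = c *\<^sub>C \<sigma> l a)
        \<and> (\<forall>a b. \<sigma> l (a * b) = \<sigma> l a * \<sigma> l b)
        \<and> (\<forall>a. \<sigma> l (cstar a) = cstar (\<sigma> l a))
        \<and> \<sigma> l 1 = 1)
     \<and> (\<forall>a. \<sigma> 1 a = a)
     \<and> (\<forall>l\<in>sphere 0 1. \<forall>m\<in>sphere 0 1. \<forall>a. \<sigma> (l * m) a = \<sigma> l (\<sigma> m a))
     \<and> (\<forall>a. continuous_on (sphere 0 1) (\<lambda>l. \<sigma> l a))"

definition spec_sub :: "(complex \<Rightarrow> 'a::cstar_algebra \<Rightarrow> 'a) \<Rightarrow> int \<Rightarrow> 'a set" where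
  "spec_sub \<sigma> n = {a. \<forall>l\<in>sphere 0 1. \<sigma> l a = (l powi n) *\<^sub>C a}"

definition P0 :: "(complex \<Rightarrow> 'a::cstar_algebra \<Rightarrow> 'a) \<Rightarrow> 'a \<Rightarrow> 'a" where
  "P0 \<sigma> a = (1 / (2 * pi)) *\<^sub>R integral {0..2 * pi} (\<lambda>t. \<sigma> (cis t) a)"

definition unital_star_subalg :: "'a::cstar_algebra set \<Rightarrow> bool" where
  "unital_star_subalg B \<longleftrightarrow> 1 \<in> B \<and> (\<forall>x\<in>B. \<forall>y\<in>B. x + y \<in> B \<and> x * y \<in> B)
     \<and> (\<forall>c. \<forall>x\<in>B. c *\<^sub>C x \<in> B) \<and> (\<forall>x\<in>B. cstar x \<in> B)"

definition star_alg_gen :: "'a::cstar_algebra set \<Rightarrow> 'a set" where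
  "star_alg_gen S = \<Inter> {B. unital_star_subalg B \<and> S \<subseteq> B}"

definition finite_frame :: "'a::cstar_algebra set \<Rightarrow> nat \<Rightarrow> (nat \<Rightarrow> 'a) \<Rightarrow> bool" where
  "finite_frame X m \<zeta> \<longleftrightarrow> (\<forall>j<m. \<zeta> j \<in> X) \<and> (\<forall>x\<in>X. (\<Sum>j<m. \<zeta> j * cstar (\<zeta> j)) * x = x)"

end

theory Submission
  imports Defs
begin

lemma cstar_one: "cstar (1::'a::cstar_algebra) = 1"
proof -
  have "cstar (cstar (1::'a) * 1) = cstar 1 * cstar (cstar 1)" by (rule cstar_mult)
  thus ?thesis by (simp add: cstar_cstar)
qed

lemma cscale_zero_right: "c *\<^sub>C (0::'a::complex_normed_vector) = 0"
proof -
  have "c *\<^sub>C (0::'a) = c *\<^sub>C (0 + 0)" by simp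
  also have "\<dots> = c *\<^sub>C 0 + c *\<^sub>C 0" by (rule cscale_add_right)
  finally show ?thesis by simp
qed

lemma cscale_sum: "c *\<^sub>C (\<Sum>j\<in>A. f j) = (\<Sum>j\<in>A. c *\<^sub>C (f j :: 'a::complex_normed_vector))"
  using sum_comp_morphism[of "\<lambda>x. c *\<^sub>C x" f A, OF cscale_zero_right cscale_add_right]
  by (simp add: o_def)

lemma sphere_facts: "l \<in> sphere (0::complex) 1 \<Longrightarrow> l \<noteq> 0 \<and> norm l = 1"
  by auto

lemma one_spec: "circle_action \<sigma> \<Longrightarrow> 1 \<in> spec_sub \<sigma> 0"
  by (auto simp: spec_sub_def circle_action_def cscale_one)

lemma spec_mult:
  assumes act: "circle_action \<sigma>" and a: "a \<in> spec_sub \<sigma> n" and b: "b \<in> spec_sub \<sigma> s"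
  shows "a * b \<in> spec_sub \<sigma> (n + s)"
  unfolding spec_sub_def
proof (intro CollectI ballI)
  fix l :: complex assume l: "l \<in> sphere 0 1"
  hence l0: "l \<noteq> 0" by auto
  have "\<sigma> l (a * b) = \<sigma> l a * \<sigma> l b" using act l by (simp add: circle_action_def)
  also have "\<dots> = ((l powi n) *\<^sub>C a) * ((l powi s) *\<^sub>C b)" using a b l by (simp add: spec_sub_def)
  also have "\<dots> = (l powi s * l powi n) *\<^sub>C (a * b)"
    by (simp only: cscale_mult_left cscale_mult_right cscale_cscale)
  also have "l powi s * l powi n = l powi (n + s)" using l0 by (simp add: power_int_add mult.commute)
  finally show "\<sigma> l (a * b) = (l powi (n + s)) *\<^sub>C (a * b)" .
qed

lemma spec_cstar:
  assumes act: "circle_action \<sigma>" and a: "a \<in> spec_sub \<sigma> n"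
  shows "cstar a \<in> spec_sub \<sigma> (-n)"
  unfolding spec_sub_def
proof (intro CollectI ballI)
  fix l :: complex assume l: "l \<in> sphere 0 1"
  hence l0: "l \<noteq> 0" and nl: "norm l = 1" by auto
  have nz: "norm (l powi n) = 1" using nl by (simp add: norm_power_int)
  have "l powi n * cnj (l powi n) = 1"
    using complex_norm_square[of "l powi n"] nz by simp
  hence c0: "inverse (l powi n) = cnj (l powi n)" by (rule inverse_unique)
  have c: "cnj (l powi n) = l powi (-n)"
    unfolding power_int_minus c0 ..
  have "\<sigma> l (cstar a) = cstar (\<sigma> l a)" using act l by (simp add: circle_action_def)
  also have "\<dots> = cstar ((l powi n) *\<^sub>C a)" using a l by (simp add: spec_sub_def)
  also have "\<dots> = cnj (l powi n) *\<^sub>C cstar a" by (rule cstar_cscale)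
  finally show "\<sigma> l (cstar a) = (l powi (-n)) *\<^sub>C cstar a" using c by simp
qed

lemma sum_reindex_mult:
  "(\<Sum>i<m*k. f i) = (\<Sum>w<m. \<Sum>j<k. f (w*k+j))" for f :: "nat \<Rightarrow> 'b::comm_monoid_add"
proof (induction m)
  case 0 then show ?case by simp
next
  case (Suc m)
  have U: "{..<Suc m*k} = {..<m*k} \<union> {m*k..<m*k+k}" by auto
  have "(\<Sum>i<Suc m*k. f i) = (\<Sum>i<m*k. f i) + (\<Sum>i\<in>{m*k..<m*k+k}. f i)"
    unfolding U by (rule sum.union_disjoint) auto
  also have "(\<Sum>i\<in>{m*k..<m*k+k}. f i) = (\<Sum>j<k. f (m*k+j))"
  proof -
    have "{m*k..<m*k+k} = (\<lambda>j. m*k+j) ` {..<k}" 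
    proof (intro set_eqI iffI)
      fix x assume "x \<in> {m*k..<m*k+k}"
      then show "x \<in> (\<lambda>j. m*k+j) ` {..<k}"
        by (intro image_eqI[of _ _ "x - m*k"]) auto
    qed auto
    then show ?thesis by (simp add: sum.reindex)
  qed
  finally show ?case using Suc by simp
qed

theorem lemma7p6:
  fixes \<sigma> :: "complex \<Rightarrow> 'a::cstar_algebra \<Rightarrow> 'a"
    and Acal :: "'a set"
    and H0 :: "'h::chilbert_space set"
    and \<rho> :: "'a \<Rightarrow> 'h \<Rightarrow> 'h"
    and Dom0 :: "'h set" and D0 :: "'h \<Rightarrow> 'h" and \<delta>0 :: "'a \<Rightarrow> 'h \<Rightarrow> 'h"
    and \<phi> :: "'a \<Rightarrow> 'h \<Rightarrow> 'h" and \<delta> :: "'a \<Rightarrow> 'h \<Rightarrow> 'h"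
    and \<mu> :: real
    and kR :: nat and \<zeta>R :: "nat \<Rightarrow> 'a" and kL :: nat and \<zeta>L :: "nat \<Rightarrow> 'a"
  assumes act: "circle_action \<sigma>"
    and Acal_sub: "unital_star_subalg Acal"
    and Acal_dense: "closure Acal = UNIV"
    and Acal_P0: "P0 \<sigma> ` Acal \<subseteq> Acal"
    and Acal_gen: "Acal = star_alg_gen (Acal \<inter> spec_sub \<sigma> 1)"
    and H_sep: "\<exists>D::'h set. countable D \<and> closure D = UNIV"
    and H0_sub: "csubspace H0" and H0_closed: "closed H0"
    and rho_rep: "star_rep_on (spec_sub \<sigma> 0) H0 \<rho>"
    and rho_inj: "\<forall>a\<in>spec_sub \<sigma> 0. \<forall>b\<in>spec_sub \<sigma> 0. (\<forall>x\<in>H0. \<rho> a x = \<rho> b x) \<longrightarrow> a = b"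
    and D0_sa: "selfadjoint_on H0 Dom0 D0"
    and rho_dom: "\<forall>a\<in>Acal \<inter> spec_sub \<sigma> 0. \<rho> a ` Dom0 \<subseteq> Dom0"
    and delta0_bdd: "\<forall>a\<in>Acal \<inter> spec_sub \<sigma> 0. bounded_op_on H0 (\<delta>0 a)"
    and delta0_comm: "\<forall>a\<in>Acal \<inter> spec_sub \<sigma> 0. \<forall>x\<in>Dom0. \<delta>0 a x = D0 (\<rho> a x) - \<rho> a (D0 x)"
    and phi_rep: "star_rep_on UNIV UNIV \<phi>"
    and delta_bdd: "\<forall>a\<in>Acal. bounded_op_on UNIV (\<delta> a)"
    and delta_add: "\<forall>a\<in>Acal. \<forall>b\<in>Acal. \<forall>\<xi>. \<delta> (a + b) \<xi> = \<delta> a \<xi> + \<delta> b \<xi>"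
    and delta_scale: "\<forall>c. \<forall>a\<in>Acal. \<forall>\<xi>. \<delta> (c *\<^sub>C a) \<xi> = c *\<^sub>C \<delta> a \<xi>"
    and cond1: "\<forall>a\<in>Acal \<inter> spec_sub \<sigma> 0. \<forall>\<xi>\<in>H0. \<delta> a \<xi> = \<delta>0 a \<xi> \<and> \<phi> a \<xi> = \<rho> a \<xi>"
    and mu_pos: "\<mu> > 0"
    and cond2: "\<forall>n::int. \<forall>a\<in>Acal \<inter> spec_sub \<sigma> n. \<forall>b\<in>Acal. \<forall>\<xi>.
                  \<delta> (a * b) \<xi> = \<delta> a (\<phi> b \<xi>) + complex_of_real (\<mu> powi n) *\<^sub>C \<phi> a (\<delta> b \<xi>)"
    and zR_in: "\<forall>j<kR. \<zeta>R j \<in> Acal \<inter> spec_sub \<sigma> 1"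
    and zL_in: "\<forall>j<kL. \<zeta>L j \<in> Acal \<inter> spec_sub \<sigma> 1"
    and zR_sum: "(\<Sum>j<kR. \<zeta>R j * cstar (\<zeta>R j)) = 1"
    and zL_sum: "(\<Sum>j<kL. cstar (\<zeta>L j) * \<zeta>L j) = 1"
    and zR_delta: "\<forall>\<xi>. (\<Sum>j<kR. \<phi> (\<zeta>R j) (\<delta> (cstar (\<zeta>R j)) \<xi>)) = 0"
    and zL_delta: "\<forall>\<xi>. (\<Sum>j<kL. \<phi> (cstar (\<zeta>L j)) (\<delta> (\<zeta>L j) \<xi>)) = 0"
  shows "\<forall>n::int. \<exists>m \<zeta>. finite_frame (Acal \<inter> spec_sub \<sigma> n) m \<zeta>
            \<and> (\<forall>\<xi>. (\<Sum>j<m. \<phi> (\<zeta> j) (\<delta> (cstar (\<zeta> j)) \<xi>)) = 0)"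
  proof -
  have phiv_add: "\<And>a x y. \<phi> a (x + y) = \<phi> a x + \<phi> a y"
    using phi_rep by (simp add: star_rep_on_def bounded_op_on_def)
  have phiv_sc: "\<And>a c x. \<phi> a (c *\<^sub>C x) = c *\<^sub>C \<phi> a x"
    using phi_rep by (simp add: star_rep_on_def bounded_op_on_def)
  have phi_add: "\<And>a b x. \<phi> (a + b) x = \<phi> a x + \<phi> b x"
    using phi_rep by (simp add: star_rep_on_def)
  have phi_mult: "\<And>a b x. \<phi> (a * b) x = \<phi> a (\<phi> b x)"
    using phi_rep by (simp add: star_rep_on_def)
  have phi_one: "\<And>x. \<phi> 1 x = x"
    using phi_rep by (simp add: star_rep_on_def)
  have phiv_0: "\<And>a. \<phi> a 0 = 0"
    using phiv_add[of _ 0 0] by simp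
  have phi_0: "\<And>x. \<phi> 0 x = 0"
    using phi_add[of 0 0] by simp
  have phiv_sum: "\<And>a f (A::nat set). \<phi> a (\<Sum>j\<in>A. f j) = (\<Sum>j\<in>A. \<phi> a (f j))"
  proof -
    fix a f and A :: "nat set"
    show "\<phi> a (\<Sum>j\<in>A. f j) = (\<Sum>j\<in>A. \<phi> a (f j))"
      using sum_comp_morphism[of "\<phi> a" f A, OF phiv_0 phiv_add] by (simp add: o_def)
  qed
  have phi_sum: "\<And>g x (A::nat set). \<phi> (\<Sum>j\<in>A. g j) x = (\<Sum>j\<in>A. \<phi> (g j) x)"
  proof -
    fix g x and A :: "nat set"
    show "\<phi> (\<Sum>j\<in>A. g j) x = (\<Sum>j\<in>A. \<phi> (g j) x)"
      using sum_comp_morphism[of "\<lambda>a. \<phi> a x" g A, OF phi_0 phi_add] by (simp add: o_def)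
  qed
  have A_mult: "\<And>a b. a \<in> Acal \<Longrightarrow> b \<in> Acal \<Longrightarrow> a * b \<in> Acal"
    using Acal_sub by (simp add: unital_star_subalg_def)
  have A_one: "1 \<in> Acal"
    using Acal_sub by (simp add: unital_star_subalg_def)
  have A_cstar: "\<And>a. a \<in> Acal \<Longrightarrow> cstar a \<in> Acal"
    using Acal_sub by (simp add: unital_star_subalg_def)
  have delta_one: "\<And>\<xi>. \<delta> 1 \<xi> = 0"
  proof -
    fix \<xi>
    have "1 \<in> Acal \<inter> spec_sub \<sigma> 0" using A_one one_spec[OF act] by simp
    hence "\<delta> (1 * 1) \<xi> = \<delta> 1 (\<phi> 1 \<xi>) + complex_of_real (\<mu> powi 0) *\<^sub>C \<phi> 1 (\<delta> 1 \<xi>)"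
      using cond2 A_one by blast
    hence "\<delta> 1 \<xi> = \<delta> 1 \<xi> + \<delta> 1 \<xi>" by (simp add: phi_one cscale_one)
    thus "\<delta> 1 \<xi> = 0" by simp
  qed
  have step: "\<exists>(m'::nat) \<zeta>'. (\<forall>j<m'. \<zeta>' j \<in> Acal \<inter> spec_sub \<sigma> (n + s))
        \<and> (\<Sum>j<m'. \<zeta>' j * cstar (\<zeta>' j)) = 1
        \<and> (\<forall>\<xi>. (\<Sum>j<m'. \<phi> (\<zeta>' j) (\<delta> (cstar (\<zeta>' j)) \<xi>)) = 0)"
    if z_in: "\<forall>j<m. \<zeta> j \<in> Acal \<inter> spec_sub \<sigma> n"
      and z_sum: "(\<Sum>j<m. \<zeta> j * cstar (\<zeta> j)) = 1"
      and z_del: "\<forall>\<xi>. (\<Sum>j<m. \<phi> (\<zeta> j) (\<delta> (cstar (\<zeta> j)) \<xi>)) = 0"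
      and g_in: "\<forall>j<k. g j \<in> Acal \<inter> spec_sub \<sigma> s"
      and g_sum: "(\<Sum>j<k. g j * cstar (g j)) = 1"
      and g_del: "\<forall>\<xi>. (\<Sum>j<k. \<phi> (g j) (\<delta> (cstar (g j)) \<xi>)) = 0"
    for m :: nat and \<zeta> and k :: nat and g and n s :: int
  proof -
    define Z where "Z i = \<zeta> (i div k) * g (i mod k)" for i
    have Zwj: "Z (w*k+j) = \<zeta> w * g j" if "j < k" for w j
      using that by (simp add: Z_def)
    have mem: "\<forall>j<m*k. Z j \<in> Acal \<inter> spec_sub \<sigma> (n + s)"
    proof (intro allI impI)
      fix i assume i: "i < m*k"
      hence k0: "0 < k" by (cases k) auto
      have "i div k < m" using i by (simp add: less_mult_imp_div_less)
      moreover have "i mod k < k" using k0 by simp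
      ultimately show "Z i \<in> Acal \<inter> spec_sub \<sigma> (n + s)"
        using z_in g_in A_mult spec_mult[OF act] by (auto simp: Z_def)
    qed
    have fr: "(\<Sum>i<m*k. Z i * cstar (Z i)) = 1"
    proof -
      have "(\<Sum>i<m*k. Z i * cstar (Z i)) = (\<Sum>w<m. \<Sum>j<k. \<zeta> w * (g j * cstar (g j)) * cstar (\<zeta> w))"
        by (simp add: sum_reindex_mult Zwj cstar_mult mult.assoc)
      also have "\<dots> = (\<Sum>w<m. \<zeta> w * (\<Sum>j<k. g j * cstar (g j)) * cstar (\<zeta> w))"
        by (simp add: sum_distrib_left sum_distrib_right)
      also have "\<dots> = 1" using g_sum z_sum by simp
      finally show ?thesis .
    qed
    have dl: "(\<Sum>i<m*k. \<phi> (Z i) (\<delta> (cstar (Z i)) \<xi>)) = 0" for \<xi>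
    proof -
      define c where "c = complex_of_real (\<mu> powi (-s))"
      have tm: "\<phi> (\<zeta> w * g j) (\<delta> (cstar (\<zeta> w * g j)) \<xi>)
          = \<phi> (\<zeta> w) (\<phi> (g j) (\<delta> (cstar (g j)) (\<phi> (cstar (\<zeta> w)) \<xi>)))
            + \<phi> (\<zeta> w) (c *\<^sub>C \<phi> (g j * cstar (g j)) (\<delta> (cstar (\<zeta> w)) \<xi>))"
        if w: "w < m" and j: "j < k" for w j
      proof -
        have a: "cstar (g j) \<in> Acal \<inter> spec_sub \<sigma> (-s)"
          using g_in j A_cstar spec_cstar[OF act] by blast
        have b: "cstar (\<zeta> w) \<in> Acal" using z_in w A_cstar by blast
        have "\<delta> (cstar (g j) * cstar (\<zeta> w)) \<xi> = \<delta> (cstar (g j)) (\<phi> (cstar (\<zeta> w)) \<xi>)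
              + c *\<^sub>C \<phi> (cstar (g j)) (\<delta> (cstar (\<zeta> w)) \<xi>)"
          using cond2 a b unfolding c_def by blast
        thus ?thesis by (simp add: cstar_mult phi_mult phiv_add phiv_sc)
      qed
      have "(\<Sum>i<m*k. \<phi> (Z i) (\<delta> (cstar (Z i)) \<xi>))
          = (\<Sum>w<m. \<Sum>j<k. \<phi> (\<zeta> w * g j) (\<delta> (cstar (\<zeta> w * g j)) \<xi>))"
        by (simp add: sum_reindex_mult Zwj)
      also have "\<dots> = (\<Sum>w<m. \<Sum>j<k. \<phi> (\<zeta> w) (\<phi> (g j) (\<delta> (cstar (g j)) (\<phi> (cstar (\<zeta> w)) \<xi>)))
            + \<phi> (\<zeta> w) (c *\<^sub>C \<phi> (g j * cstar (g j)) (\<delta> (cstar (\<zeta> w)) \<xi>)))"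
        by (intro sum.cong refl) (simp add: tm)
      also have "\<dots> = (\<Sum>w<m. \<phi> (\<zeta> w) (\<Sum>j<k. \<phi> (g j) (\<delta> (cstar (g j)) (\<phi> (cstar (\<zeta> w)) \<xi>)))
            + \<phi> (\<zeta> w) (c *\<^sub>C \<phi> (\<Sum>j<k. g j * cstar (g j)) (\<delta> (cstar (\<zeta> w)) \<xi>)))"
        by (simp add: sum.distrib phiv_sum phi_sum cscale_sum)
      also have "\<dots> = (\<Sum>w<m. c *\<^sub>C \<phi> (\<zeta> w) (\<delta> (cstar (\<zeta> w)) \<xi>))"
        using g_del g_sum by (simp add: phiv_0 phi_one phiv_sc)
      also have "\<dots> = c *\<^sub>C (\<Sum>w<m. \<phi> (\<zeta> w) (\<delta> (cstar (\<zeta> w)) \<xi>))"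
        by (simp add: cscale_sum)
      also have "\<dots> = 0" using z_del by (simp add: cscale_zero_right)
      finally show ?thesis .
    qed
    have "(\<forall>j<m*k. Z j \<in> Acal \<inter> spec_sub \<sigma> (n + s))
        \<and> (\<Sum>j<m*k. Z j * cstar (Z j)) = 1
        \<and> (\<forall>\<xi>. (\<Sum>j<m*k. \<phi> (Z j) (\<delta> (cstar (Z j)) \<xi>)) = 0)"
      using mem fr dl by blast
    then show ?thesis by blast
  qed
  have gen: "\<exists>(m::nat) \<zeta>. (\<forall>j<m. \<zeta> j \<in> Acal \<inter> spec_sub \<sigma> (int N * s))
        \<and> (\<Sum>j<m. \<zeta> j * cstar (\<zeta> j)) = 1
        \<and> (\<forall>\<xi>. (\<Sum>j<m. \<phi> (\<zeta> j) (\<delta> (cstar (\<zeta> j)) \<xi>)) = 0)"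
    if g_in: "\<forall>j<k. g j \<in> Acal \<inter> spec_sub \<sigma> s"
      and g_sum: "(\<Sum>j<k. g j * cstar (g j)) = 1"
      and g_del: "\<forall>\<xi>. (\<Sum>j<k. \<phi> (g j) (\<delta> (cstar (g j)) \<xi>)) = 0"
    for N :: nat and k :: nat and g and s :: int
  proof (induction N)
    case 0
    show ?case
      apply (rule exI[of _ 1], rule exI[of _ "\<lambda>_. 1"])
      using A_one one_spec[OF act] by (simp add: cstar_one phi_one delta_one)
  next
    case (Suc N)
    then obtain m :: nat and \<zeta> where "\<forall>j<m. \<zeta> j \<in> Acal \<inter> spec_sub \<sigma> (int N * s)"
        "(\<Sum>j<m. \<zeta> j * cstar (\<zeta> j)) = 1"
        "\<forall>\<xi>. (\<Sum>j<m. \<phi> (\<zeta> j) (\<delta> (cstar (\<zeta> j)) \<xi>)) = 0" by blast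
    from step[OF this g_in g_sum g_del] show ?case
      by (simp add: algebra_simps)
  qed
  have R: "\<exists>(m::nat) \<zeta>. (\<forall>j<m. \<zeta> j \<in> Acal \<inter> spec_sub \<sigma> (int N * 1))
        \<and> (\<Sum>j<m. \<zeta> j * cstar (\<zeta> j)) = 1
        \<and> (\<forall>\<xi>. (\<Sum>j<m. \<phi> (\<zeta> j) (\<delta> (cstar (\<zeta> j)) \<xi>)) = 0)" for N
    by (rule gen[OF zR_in zR_sum zR_delta])
  have L: "\<exists>(m::nat) \<zeta>. (\<forall>j<m. \<zeta> j \<in> Acal \<inter> spec_sub \<sigma> (int N * (-1)))
        \<and> (\<Sum>j<m. \<zeta> j * cstar (\<zeta> j)) = 1
        \<and> (\<forall>\<xi>. (\<Sum>j<m. \<phi> (\<zeta> j) (\<delta> (cstar (\<zeta> j)) \<xi>)) = 0)" for N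
  proof (rule gen[of kL "\<lambda>j. cstar (\<zeta>L j)"])
    show "\<forall>j<kL. cstar (\<zeta>L j) \<in> Acal \<inter> spec_sub \<sigma> (-1)"
      using zL_in A_cstar spec_cstar[OF act] by fastforce
    show "(\<Sum>j<kL. cstar (\<zeta>L j) * cstar (cstar (\<zeta>L j))) = 1"
      using zL_sum by (simp add: cstar_cstar)
    show "\<forall>\<xi>. (\<Sum>j<kL. \<phi> (cstar (\<zeta>L j)) (\<delta> (cstar (cstar (\<zeta>L j))) \<xi>)) = 0"
      using zL_delta by (simp add: cstar_cstar)
  qed
  show ?thesis
  proof
    fix n :: int
    have "\<exists>(m::nat) \<zeta>. (\<forall>j<m. \<zeta> j \<in> Acal \<inter> spec_sub \<sigma> n)
        \<and> (\<Sum>j<m. \<zeta> j * cstar (\<zeta> j)) = 1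
        \<and> (\<forall>\<xi>. (\<Sum>j<m. \<phi> (\<zeta> j) (\<delta> (cstar (\<zeta> j)) \<xi>)) = 0)"
    proof (cases "n \<ge> 0")
      case True
      then show ?thesis using R[of "nat n"] by simp
    next
      case False
      then show ?thesis using L[of "nat (-n)"] by simp
    qed
    then obtain m :: nat and \<zeta> where h: "\<forall>j<m. \<zeta> j \<in> Acal \<inter> spec_sub \<sigma> n"
        "(\<Sum>j<m. \<zeta> j * cstar (\<zeta> j)) = 1"
        "\<forall>\<xi>. (\<Sum>j<m. \<phi> (\<zeta> j) (\<delta> (cstar (\<zeta> j)) \<xi>)) = 0" by blast
    have "finite_frame (Acal \<inter> spec_sub \<sigma> n) m \<zeta>"
      unfolding finite_frame_def using h by simp
    then show "\<exists>m \<zeta>. finite_frame (Acal \<inter> spec_sub \<sigma> n) m \<zeta>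
            \<and> (\<forall>\<xi>. (\<Sum>j<m. \<phi> (\<zeta> j) (\<delta> (cstar (\<zeta> j)) \<xi>)) = 0)"
      using h(3) by blast
  qed
qed

end
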